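(* Let $p$ be a prime, $S\subseteq\mathbb{Z}_p$ and $0<\alpha\leq 1$. Then $$\tfrac12\mathcal{C}_\alpha(S)\leq \mathcal{C}^{\mathrm{bsgs}}_\alpha(S)\leq \mathcal{C}^{\mathrm{bsgs1}}_\alpha(S).$$
   Context: For $L\subseteq\mathbb{Z}_p^2$, $I(L)=\{x\in\mathbb{Z}_p\mid \exists (a,b),(a',b')\in L,\ (a,b)\neq(a',b'),\ ax+b=a'x+b'\}$, and the generic $\alpha$-complexity $\mathcal{C}_\alpha(S)$ is the smallest $|L|$ with $|S\cap I(L)|\ge\alpha|S|$. For $L\subseteq\mathbb{Z}_p^2$ and $C\subseteq\mathbb{Z}_p$, $I(L,C)=\{x\in\mathbb{Z}_p\mid \exists (a,b)\in L,\ c\in C \text{ with } a\neq0 \text{ and } ax+b=c\}$. The baby-step giant-step $\alpha$-complexity $\mathcal{C}^{\mathrm{bsgs}}_\alpha(S)$ is the smallest integer $m$ such that there exist $L\subseteq\mathbb{Z}_p^2$ and $C\subseteq\mathbb{Z}_p$ with $|L|=|C|=m$ and $|I(L,C)\cap S|\geq\alpha|S|$. The BSGS-1 $\alpha$-complexity $\mathcal{C}^{\mathrm{bsgs1}}_\alpha(S)$ is defined in the same way but with the additional requirement $L\subseteq\{1\}\times\mathbb{Z}_p$ (equivalently, the smallest $n$ such that there are $X,Y\subseteq\mathbb{Z}_p$ with $|X|=|Y|=n$ and $|S\cap(X-Y)|\ge\alpha|S|$, where $X-Y=\{x-y: x\in X, y\in Y\}$). *)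

theory Defs
  imports Complex_Main "HOL-Computational_Algebra.Primes"
begin

text \<open>Z_p is modelled as the set of residues {0..<p} of int, with arithmetic taken mod p.\<close>

definition zp :: "int \<Rightarrow> int set" where
  "zp p = {0..<p}"

definition Igen :: "int \<Rightarrow> (int \<times> int) set \<Rightarrow> int set" where
  "Igen p L = {x \<in> zp p. \<exists>a b a' b'. (a, b) \<in> L \<and> (a', b') \<in> L \<and> (a, b) \<noteq> (a', b')
                 \<and> (a * x + b) mod p = (a' * x + b') mod p}"

definition Ibsgs :: "int \<Rightarrow> (int \<times> int) set \<Rightarrow> int set \<Rightarrow> int set" where
  "Ibsgs p L C = {x \<in> zp p. \<exists>a b c. (a, b) \<in> L \<and> c \<in> C \<and> a \<noteq> 0
                 \<and> (a * x + b) mod p = c}"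

definition Cgen :: "int \<Rightarrow> real \<Rightarrow> int set \<Rightarrow> nat" where
  "Cgen p \<alpha> S = (LEAST n. \<exists>L. L \<subseteq> zp p \<times> zp p \<and> card L = n
                     \<and> real (card (S \<inter> Igen p L)) \<ge> \<alpha> * real (card S))"

definition Cbsgs :: "int \<Rightarrow> real \<Rightarrow> int set \<Rightarrow> nat" where
  "Cbsgs p \<alpha> S = (LEAST m. \<exists>L C. L \<subseteq> zp p \<times> zp p \<and> C \<subseteq> zp p \<and> card L = m \<and> card C = m
                     \<and> real (card (Ibsgs p L C \<inter> S)) \<ge> \<alpha> * real (card S))"

definition Cbsgs1 :: "int \<Rightarrow> real \<Rightarrow> int set \<Rightarrow> nat" where
  "Cbsgs1 p \<alpha> S = (LEAST m. \<exists>L C. L \<subseteq> {1} \<times> zp p \<and> C \<subseteq> zp p \<and> card L = m \<and> card C = m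
                     \<and> real (card (Ibsgs p L C \<inter> S)) \<ge> \<alpha> * real (card S))"

end

theory Submission
  imports Defs
begin

lemma witness1:
  fixes p :: int and S :: "int set" and \<alpha> :: real
  assumes "p > 1" and "S \<subseteq> zp p" and "\<alpha> \<le> 1"
  shows "\<exists>L C. L \<subseteq> {1} \<times> zp p \<and> C \<subseteq> zp p \<and> card L = nat p \<and> card C = nat p
                     \<and> real (card (Ibsgs p L C \<inter> S)) \<ge> \<alpha> * real (card S)"
proof -
  have fin: "finite (zp p)" by (simp add: zp_def)
  have I: "Ibsgs p ({1} \<times> zp p) (zp p) = zp p"
  proof
    show "zp p \<subseteq> Ibsgs p ({1} \<times> zp p) (zp p)"
    proof
      fix x assume x: "x \<in> zp p"
      have "0 \<in> zp p" using assms(1) by (simp add: zp_def)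
      moreover have "(1 * x + 0) mod p = x" using x by (simp add: zp_def)
      ultimately show "x \<in> Ibsgs p ({1} \<times> zp p) (zp p)" unfolding Ibsgs_def using x by force
    qed
  qed (auto simp: Ibsgs_def)
  have "Ibsgs p ({1} \<times> zp p) (zp p) \<inter> S = S" using I assms(2) by blast
  moreover have "\<alpha> * real (card S) \<le> real (card S)" using mult_right_mono[OF assms(3), of "real (card S)"] by simp
  moreover have "card ({1::int} \<times> zp p) = nat p" by (simp add: card_cartesian_product zp_def)
  moreover have "card (zp p) = nat p" by (simp add: zp_def)
  ultimately have fact: "{1} \<times> zp p \<subseteq> {1} \<times> zp p \<and> zp p \<subseteq> zp p \<and> card ({1::int} \<times> zp p) = nat p \<and> card (zp p) = nat p
                     \<and> real (card (Ibsgs p ({1} \<times> zp p) (zp p) \<inter> S)) \<ge> \<alpha> * real (card S)"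
    by simp
  show ?thesis
    apply (rule exI[of _ "{1::int} \<times> zp p"])
    apply (rule exI[of _ "zp p"])
    apply (rule fact)
    done
qed

theorem proposition3:
  fixes p :: int and S :: "int set" and \<alpha> :: real
  assumes "prime p" and "S \<subseteq> zp p" and "0 < \<alpha>" and "\<alpha> \<le> 1"
  shows "real (Cgen p \<alpha> S) / 2 \<le> real (Cbsgs p \<alpha> S)
         \<and> Cbsgs p \<alpha> S \<le> Cbsgs1 p \<alpha> S"
proof -
  have p1: "p > 1" using assms(1) prime_gt_1_int by blast
  have fin: "finite (zp p)" by (simp add: zp_def)
  have one: "{1} \<times> zp p \<subseteq> zp p \<times> zp p" using p1 by (auto simp: zp_def)
  obtain L C where W: "L \<subseteq> {1} \<times> zp p" "C \<subseteq> zp p" "card L = nat p" "card C = nat p"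
       "real (card (Ibsgs p L C \<inter> S)) \<ge> \<alpha> * real (card S)"
    using witness1[OF p1 assms(2) assms(4)] by (elim exE conjE) simp
  have ex1: "\<exists>m L C. L \<subseteq> {1} \<times> zp p \<and> C \<subseteq> zp p \<and> card L = m \<and> card C = m
                     \<and> real (card (Ibsgs p L C \<inter> S)) \<ge> \<alpha> * real (card S)"
    apply (rule exI[of _ "nat p"], rule exI[of _ L], rule exI[of _ C])
    using W by simp
  have "\<exists>L C. L \<subseteq> {1} \<times> zp p \<and> C \<subseteq> zp p \<and> card L = Cbsgs1 p \<alpha> S \<and> card C = Cbsgs1 p \<alpha> S
                     \<and> real (card (Ibsgs p L C \<inter> S)) \<ge> \<alpha> * real (card S)"
    unfolding Cbsgs1_def by (rule LeastI_ex[OF ex1])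
  then obtain L1 C1 where W1: "L1 \<subseteq> {1} \<times> zp p" "C1 \<subseteq> zp p" "card L1 = Cbsgs1 p \<alpha> S"
      "card C1 = Cbsgs1 p \<alpha> S" "real (card (Ibsgs p L1 C1 \<inter> S)) \<ge> \<alpha> * real (card S)"
    by (elim exE conjE) simp
  have ex2: "\<exists>m L C. L \<subseteq> zp p \<times> zp p \<and> C \<subseteq> zp p \<and> card L = m \<and> card C = m
                     \<and> real (card (Ibsgs p L C \<inter> S)) \<ge> \<alpha> * real (card S)"
    apply (rule exI[of _ "Cbsgs1 p \<alpha> S"], rule exI[of _ L1], rule exI[of _ C1])
    using W1 one by simp
  have second: "Cbsgs p \<alpha> S \<le> Cbsgs1 p \<alpha> S"
    unfolding Cbsgs_def
    apply (rule Least_le)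
    apply (rule exI[of _ L1], rule exI[of _ C1])
    using W1 one by simp
  have "\<exists>L C. L \<subseteq> zp p \<times> zp p \<and> C \<subseteq> zp p \<and> card L = Cbsgs p \<alpha> S \<and> card C = Cbsgs p \<alpha> S
                     \<and> real (card (Ibsgs p L C \<inter> S)) \<ge> \<alpha> * real (card S)"
    unfolding Cbsgs_def by (rule LeastI_ex[OF ex2])
  then obtain L2 C2 where W2: "L2 \<subseteq> zp p \<times> zp p" "C2 \<subseteq> zp p" "card L2 = Cbsgs p \<alpha> S"
      "card C2 = Cbsgs p \<alpha> S" "real (card (Ibsgs p L2 C2 \<inter> S)) \<ge> \<alpha> * real (card S)"
    by (elim exE conjE) simp
  define L' where "L' = L2 \<union> Pair 0 ` C2"
  have L'sub: "L' \<subseteq> zp p \<times> zp p" using W2 p1 by (auto simp: L'_def zp_def)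
  have finL2: "finite L2" using W2(1) fin by (meson finite_SigmaI finite_subset)
  have finC2: "finite C2" using W2(2) fin finite_subset by blast
  have cardL': "card L' \<le> 2 * Cbsgs p \<alpha> S"
  proof -
    have "card L' \<le> card L2 + card (Pair (0::int) ` C2)" unfolding L'_def by (rule card_Un_le)
    also have "card (Pair (0::int) ` C2) \<le> card C2" by (rule card_image_le[OF finC2])
    finally show ?thesis using W2 by simp
  qed
  have sub: "Ibsgs p L2 C2 \<subseteq> Igen p L'"
  proof
    fix x assume "x \<in> Ibsgs p L2 C2"
    then obtain a b c where x: "x \<in> zp p" "(a, b) \<in> L2" "c \<in> C2" "a \<noteq> 0" "(a * x + b) mod p = c"
      unfolding Ibsgs_def by blast
    have "c \<in> zp p" using x(3) W2(2) by blast
    then have "(0 * x + c) mod p = c" by (simp add: zp_def)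
    moreover have "(a, b) \<in> L'" "(0, c) \<in> L'" using x by (auto simp: L'_def)
    ultimately have F: "(a * x + b) mod p = (0 * x + c) mod p \<and> (a, b) \<in> L' \<and> (0, c) \<in> L' \<and> (a, b) \<noteq> (0, c)"
      using x by simp
    have "\<exists>a b a' b'. (a, b) \<in> L' \<and> (a', b') \<in> L' \<and> (a, b) \<noteq> (a', b')
                 \<and> (a * x + b) mod p = (a' * x + b') mod p"
      apply (rule exI[of _ a], rule exI[of _ b], rule exI[of _ 0], rule exI[of _ c])
      using F by simp
    then show "x \<in> Igen p L'" unfolding Igen_def using x(1) by simp
  qed
  have finI: "finite (Igen p L')" by (rule finite_subset[OF _ fin]) (auto simp: Igen_def)
  have "card (Ibsgs p L2 C2 \<inter> S) \<le> card (S \<inter> Igen p L')"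
    using sub finI by (intro card_mono) auto
  then have "real (card (S \<inter> Igen p L')) \<ge> \<alpha> * real (card S)" using W2(5) by linarith
  then have "Cgen p \<alpha> S \<le> card L'" unfolding Cgen_def
    apply (intro Least_le)
    apply (rule exI[of _ L'])
    using L'sub by simp
  then have "Cgen p \<alpha> S \<le> 2 * Cbsgs p \<alpha> S" using cardL' by linarith
  then have "real (Cgen p \<alpha> S) / 2 \<le> real (Cbsgs p \<alpha> S)" by linarith
  with second show ?thesis by blast
qed

end
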